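(* Let $\delta_q$ satisfy $0<\delta_q<\min\left\{\frac{\sqrt2-1}{|\lambda_1|},\frac{2}{|\lambda_1-\lambda_{\max}|}\right\}$ and set $\delta_e=\min\{\delta^*,\delta_q\}$. Then for all $U\in B(V_*,\eta_a)\cap(\mathcal{V}_0)^N\cap\mathcal{M}_{\leqslant}^{N;N_g}$ and all $s\in[0,\delta_e]$, $$E(U)-E(g(U,s))\geqslant s\Big(\frac12-\frac{s}{2}|\lambda_1|\Big)\Big\|\mathcal{A}_{\frac{\hat g(U,s)+U}{2}}\frac{\hat g(U,s)+U}{2}\Big\|^2.$$
   Context: Let $\mathcal{V}^{N_g}$ be a real Hilbert space of finite dimension $N_g$ with inner product $(\cdot,\cdot)$ (in the paper a finite element subspace of $H_0^1(\Omega)$ with the $L^2(\Omega)$ inner product), and let $H:\mathcal{V}^{N_g}\to\mathcal{V}^{N_g}$ be a self-adjoint linear operator with eigenvalues $\lambda_1\leqslant\lambda_2\leqslant\cdots\leqslant\lambda_{N_g}$, $\lambda_{\max}=\lambda_{N_g}$; it is assumed that $\lambda_1<0$. Fix $N<N_g$ with $\lambda_N<\lambda_{N+1}$. Elements of $(\mathcal{V}^{N_g})^N$ are written $U=(u_1,\dots,u_N)$; $U^\top V=((u_i,v_j))_{i,j=1}^N$; for a real $N\times N$ matrix $A=(a_{kj})$, $UA$ is the element whose $j$-th component is $\sum_k a_{kj}u_k$; $HU=(Hu_1,\dots,Hu_N)$; $\|U\|=\operatorname{tr}(U^\top U)^{1/2}$. For symmetric matrices, $A\leqslant B$ means $B-A$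 is positive semidefinite and $A>0$ positive definite. Set $E(U)=\frac12\operatorname{tr}(U^\top HU)$ and $\nabla E(U)=HU$. For $U$, $\mathcal{A}_U=\nabla E(U)U^\top-U\nabla E(U)^\top$ is the linear operator on $\mathcal{V}^{N_g}$ given by $\mathcal{A}_Uw=\sum_{i=1}^N\big(Hu_i\,(u_i,w)-u_i\,(Hu_i,w)\big)$, applied componentwise. Quasi-Stiefel set: $\mathcal{M}_{\leqslant}^{N;N_g}=\{U:0<U^\top U\leqslant I_N\}$. Let $V_*\in(\mathcal{V}^{N_g})^N$ with $V_*^\top V_*=I_N$ and $HV_*=V_*\operatorname{diag}(\lambda_1,\dots,\lambda_N)$. $\mathcal{O}^N$ is the set of $N\times N$ orthogonal matrices, $\operatorname{dist}([U],[V_*])=\inf_{Q\in\mathcal{O}^N}\|UQ-V_*\|$, $B(U,\eta)=\{W:\|W-U\|\leqslant\eta\}$, $B([V_*],\eta)=\{W:\operatorname{dist}([W],[V_*])\leqslant\eta\}$. For $j=1,\dots,N$, let $\mathcal{V}_{0_j}=\operatorname{span}\{v_{j,1},\dots,v_{j,d_j}\}$ ($d_j\geqslant1$) with each $v_{j,k}$ an eigenvector of $H$, $(\mathcal{V}_0)^N=\mathcal{V}_{0_1}\times\cdots\times\mathcal{V}_{0_N}$, and $\lambda_{\max}^0=\max_{j,k}\frac{(v_{j,k},Hv_{j,k})}{(v_{j,k},v_{j,k})}$. Standing assumption: $\lambda_{\max}^0\leqslant0$. Fix constants $\eta_a,\eta_b,\delta^*>0$ such that (as asserted in the paper) there is a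 unique function $\hat g:B(V_*,\eta_a)\times[0,\delta^*]\to B(V_*,\eta_b)$ with $\hat g(U,s)-U=-s\,\mathcal{A}_{\frac{\hat g(U,s)+U}{2}}\frac{\hat g(U,s)+U}{2}$, and a unique function $g:B([V_*],\eta_a)\times[0,\delta^*]\to B([V_*],\eta_b)$ with $g(U,s)=\hat g(U,s)-s\nabla E(\hat g(U,s))\big(I_N-\hat g(U,s)^\top\hat g(U,s)\big)$ (extended from $B(V_*,\eta_a)$ by $g(UQ,s)=g(U,s)Q$, $Q\in\mathcal{O}^N$). One step of the quasi-orthogonal scheme $\hat U_{n+1}=U_n-s_n\mathcal{A}_{\tilde U}\tilde U$, $\tilde U=\frac{U_n+\hat U_{n+1}}2$, $U_{n+1}=\hat U_{n+1}-s_nH\hat U_{n+1}(I_N-\hat U_{n+1}^\top\hat U_{n+1})$ is given by $\hat U_{n+1}=\hat g(U_n,s_n)$, $U_{n+1}=g(U_n,s_n)$. *)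

theory Defs
  imports "HOL-Analysis.Analysis"
begin

text \<open>Elements of (V^{N_g})^N are represented as functions nat => 'v, of which only the
components with index i < N matter.  Real N x N matrices are functions nat => nat => real
(entries with indices < N matter).\<close>

definition tinner :: "nat \<Rightarrow> (nat \<Rightarrow> 'v::real_inner) \<Rightarrow> (nat \<Rightarrow> 'v) \<Rightarrow> nat \<Rightarrow> nat \<Rightarrow> real" where
  "tinner N U V = (\<lambda>i j. inner (U i) (V j))"

definition tmul :: "nat \<Rightarrow> (nat \<Rightarrow> 'v::real_vector) \<Rightarrow> (nat \<Rightarrow> nat \<Rightarrow> real) \<Rightarrow> nat \<Rightarrow> 'v" where
  "tmul N U A = (\<lambda>j. \<Sum>k<N. A k j *\<^sub>R U k)"

definition idm :: "nat \<Rightarrow> nat \<Rightarrow> real" where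
  "idm = (\<lambda>i j. if i = j then 1 else 0)"

definition tnorm :: "nat \<Rightarrow> (nat \<Rightarrow> 'v::real_inner) \<Rightarrow> real" where
  "tnorm N U = sqrt (\<Sum>i<N. inner (U i) (U i))"

definition tball :: "nat \<Rightarrow> (nat \<Rightarrow> 'v::real_inner) \<Rightarrow> real \<Rightarrow> (nat \<Rightarrow> 'v) set" where
  "tball N U \<eta> = {W. tnorm N (\<lambda>i. W i - U i) \<le> \<eta>}"

definition psd_mat :: "nat \<Rightarrow> (nat \<Rightarrow> nat \<Rightarrow> real) \<Rightarrow> bool" where
  "psd_mat N A \<longleftrightarrow> (\<forall>i<N. \<forall>j<N. A i j = A j i) \<and>
     (\<forall>x::nat \<Rightarrow> real. (\<Sum>i<N. \<Sum>j<N. x i * A i j * x j) \<ge> 0)"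

definition pd_mat :: "nat \<Rightarrow> (nat \<Rightarrow> nat \<Rightarrow> real) \<Rightarrow> bool" where
  "pd_mat N A \<longleftrightarrow> (\<forall>i<N. \<forall>j<N. A i j = A j i) \<and>
     (\<forall>x::nat \<Rightarrow> real. (\<exists>i<N. x i \<noteq> 0) \<longrightarrow> (\<Sum>i<N. \<Sum>j<N. x i * A i j * x j) > 0)"

definition quasi_stiefel :: "nat \<Rightarrow> (nat \<Rightarrow> 'v::real_inner) set" where
  "quasi_stiefel N = {U. pd_mat N (tinner N U U) \<and>
        psd_mat N (\<lambda>i j. idm i j - tinner N U U i j)}"

definition energy :: "nat \<Rightarrow> ('v \<Rightarrow> 'v) \<Rightarrow> (nat \<Rightarrow> 'v::real_inner) \<Rightarrow> real" where
  "energy N H U = (1/2) * (\<Sum>i<N. inner (U i) (H (U i)))"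

definition Aop :: "nat \<Rightarrow> ('v \<Rightarrow> 'v) \<Rightarrow> (nat \<Rightarrow> 'v::real_inner) \<Rightarrow> 'v \<Rightarrow> 'v" where
  "Aop N H U w = (\<Sum>i<N. inner (U i) w *\<^sub>R H (U i) - inner (H (U i)) w *\<^sub>R U i)"

definition Aapp :: "nat \<Rightarrow> ('v \<Rightarrow> 'v) \<Rightarrow> (nat \<Rightarrow> 'v::real_inner) \<Rightarrow> (nat \<Rightarrow> 'v) \<Rightarrow> nat \<Rightarrow> 'v" where
  "Aapp N H U W = (\<lambda>j. Aop N H U (W j))"

definition midpt :: "(nat \<Rightarrow> 'v::real_vector) \<Rightarrow> (nat \<Rightarrow> 'v) \<Rightarrow> nat \<Rightarrow> 'v" where
  "midpt U W = (\<lambda>i. (1/2::real) *\<^sub>R (U i + W i))"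

definition gstep :: "nat \<Rightarrow> ('v \<Rightarrow> 'v) \<Rightarrow> (nat \<Rightarrow> 'v::real_inner) \<Rightarrow> real \<Rightarrow> nat \<Rightarrow> 'v" where
  "gstep N H Gh s = (\<lambda>j. Gh j - s *\<^sub>R tmul N (\<lambda>i. H (Gh i))
        (\<lambda>i k. idm i k - tinner N Gh Gh i k) j)"

definition V0N :: "nat \<Rightarrow> (nat \<Rightarrow> 'v::real_vector set) \<Rightarrow> (nat \<Rightarrow> 'v) set" where
  "V0N N S = {U. \<forall>j<N. U j \<in> span (S j)}"

definition lambda_max0 :: "nat \<Rightarrow> ('v \<Rightarrow> 'v) \<Rightarrow> (nat \<Rightarrow> 'v::real_inner set) \<Rightarrow> real" where
  "lambda_max0 N H S = Max (\<Union>j<N. (\<lambda>v. inner v (H v) / inner v v) ` S j)"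

end

theory Submission
  imports Defs
begin

lemma idm_quad: "(\<Sum>i<N. \<Sum>j<N. c i * idm i j * c j) = (\<Sum>i<N. c i * c i)"
proof (rule sum.cong[OF refl])
  fix i assume "i \<in> {..<N}"
  have "\<And>j. c i * idm i j * c j = (if i = j then c i * c i else 0)" by (simp add: idm_def)
  hence "(\<Sum>j<N. c i * idm i j * c j) = (\<Sum>j<N. if i = j then c i * c i else 0)" by simp
  also have "\<dots> = c i * c i" using \<open>i \<in> {..<N}\<close> by (simp add: sum.delta)
  finally show "(\<Sum>j<N. c i * idm i j * c j) = c i * c i" .
qed

lemma bessel:
  fixes F :: "nat \<Rightarrow> 'v::real_inner"
  assumes "psd_mat N (\<lambda>i j. idm i j - tinner N F F i j)"
  shows "(\<Sum>j<N. (inner (F j) x)^2) \<le> inner x x"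
proof -
  define c where "c j = inner (F j) x" for j
  define y where "y = (\<Sum>j<N. c j *\<^sub>R F j)"
  define \<sigma> where "\<sigma> = (\<Sum>j<N. c j * c j)"
  have q: "(\<Sum>i<N. \<Sum>j<N. c i * (idm i j - tinner N F F i j) * c j) \<ge> 0"
    using assms unfolding psd_mat_def by blast
  have yy: "inner y y = (\<Sum>i<N. \<Sum>j<N. c i * tinner N F F i j * c j)"
    unfolding y_def tinner_def by (simp add: inner_sum_left inner_sum_right sum_distrib_left algebra_simps inner_commute)
  have "(\<Sum>i<N. \<Sum>j<N. c i * (idm i j - tinner N F F i j) * c j)
      = (\<Sum>i<N. \<Sum>j<N. c i * idm i j * c j) - (\<Sum>i<N. \<Sum>j<N. c i * tinner N F F i j * c j)"
    by (simp add: algebra_simps sum_subtractf)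
  with q yy idm_quad[where N=N and c=c] have yle: "inner y y \<le> \<sigma>" unfolding \<sigma>_def by linarith
  have s0: "\<sigma> \<ge> 0" unfolding \<sigma>_def by (simp add: sum_nonneg)
  have "\<sigma> = inner y x" unfolding y_def \<sigma>_def c_def by (simp add: inner_sum_left)
  also have "\<dots> \<le> norm y * norm x" by (rule norm_cauchy_schwarz)
  also have "norm y \<le> sqrt \<sigma>" using yle by (simp add: norm_eq_sqrt_inner)
  hence "norm y * norm x \<le> sqrt \<sigma> * norm x" by (simp add: mult_right_mono)
  finally have a: "\<sigma> \<le> sqrt \<sigma> * norm x" .
  have "sqrt \<sigma> \<le> norm x"
  proof (cases "\<sigma> = 0")
    case True then show ?thesis by simp
  next
    case False
    hence "sqrt \<sigma> > 0" using s0 by simp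
    moreover have "sqrt \<sigma> * sqrt \<sigma> \<le> sqrt \<sigma> * norm x" using a s0 by (simp add: real_sqrt_mult_self)
    ultimately show ?thesis by (meson mult_le_cancel_left_pos)
  qed
  hence "\<sigma> \<le> (norm x)^2" using s0 by (metis real_sqrt_le_iff real_sqrt_pow2 sqrt_le_D)
  thus ?thesis unfolding \<sigma>_def c_def by (simp add: power2_eq_square flip: power2_norm_eq_inner)
qed

lemma orth_double_sum:
  fixes e :: "nat \<Rightarrow> 'v::real_inner"
  assumes e_orth: "\<And>i j. i < n \<Longrightarrow> j < n \<Longrightarrow> inner (e i) (e j) = (if i = j then 1 else 0)"
  shows "(\<Sum>k<n. \<Sum>m<n. a k * b m * inner (e k) (e m)) = (\<Sum>k<n. a k * b k)"
proof (rule sum.cong[OF refl])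
  fix k assume k: "k \<in> {..<n}"
  have "(\<Sum>m<n. a k * b m * inner (e k) (e m)) = (\<Sum>m<n. if k = m then a k * b k else 0)"
    by (rule sum.cong[OF refl]) (use k e_orth in auto)
  also have "\<dots> = a k * b k" using k by (simp add: sum.delta)
  finally show "(\<Sum>m<n. a k * b m * inner (e k) (e m)) = a k * b k" .
qed

lemma H_bound:
  fixes H :: "'v::euclidean_space \<Rightarrow> 'v"
  assumes H_lin: "linear H"
    and lam_sorted: "\<And>i j. i \<le> j \<Longrightarrow> j < DIM('v) \<Longrightarrow> lam i \<le> lam j"
    and e_orth: "\<And>i j. i < DIM('v) \<Longrightarrow> j < DIM('v) \<Longrightarrow> inner (e i) (e j) = (if i = j then 1 else 0)"
    and e_eig: "\<And>i. i < DIM('v) \<Longrightarrow> H (e i) = lam i *\<^sub>R e i"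
  shows "inner x (H x) \<le> lam (DIM('v) - 1) * inner x x"
proof -
  define n where "n = DIM('v)"
  define E where "E = e ` {..<n}"
  have inj: "inj_on e {..<n}"
  proof (rule inj_onI)
    fix i j assume "i \<in> {..<n}" "j \<in> {..<n}" "e i = e j"
    thus "i = j" using e_orth[of i j] e_orth[of i i] unfolding n_def by (auto split: if_splits)
  qed
  have cardE: "card E = n" unfolding E_def using inj by (simp add: card_image)
  have po: "pairwise orthogonal E"
    unfolding E_def pairwise_def orthogonal_def using e_orth n_def by auto
  have nz: "0 \<notin> E"
    unfolding E_def using e_orth n_def by (metis image_iff inner_zero_left lessThan_iff zero_neq_one)
  have ind: "independent E" using po nz by (rule pairwise_orthogonal_independent)
  have spE: "UNIV \<subseteq> span E"
    by (rule card_ge_dim_independent) (use ind cardE n_def in auto)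
  define c where "c m = inner x (e m)" for m
  define p where "p = (\<Sum>m<n. c m *\<^sub>R e m)"
  have orth: "orthogonal (x - p) y" if yE: "y \<in> E" for y
  proof -
    obtain k where k: "k < n" "y = e k" using yE E_def by auto
    have "inner (x - p) (e k) = c k - (\<Sum>m<n. c m * inner (e m) (e k))"
      unfolding p_def c_def by (simp add: inner_diff_left inner_sum_left)
    also have "(\<Sum>m<n. c m * inner (e m) (e k)) = (\<Sum>m<n. if m = k then c k else 0)"
      by (rule sum.cong[OF refl]) (use k e_orth n_def in auto)
    also have "\<dots> = c k" using k by (simp add: sum.delta')
    finally show ?thesis using k by (simp add: orthogonal_def)
  qed
  have "orthogonal (x - p) (x - p)"
    by (rule orthogonal_to_span[OF _ orth]) (use spE in auto)
  hence xp: "x = p" by (simp add: orthogonal_self)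
  have Hp: "H p = (\<Sum>m<n. (c m * lam m) *\<^sub>R e m)"
    unfolding p_def using H_lin e_eig n_def by (simp add: linear_sum linear_scale)
  have "inner p (H p) = (\<Sum>k<n. \<Sum>m<n. (c k * lam k) * c m * inner (e k) (e m))"
    unfolding Hp by (simp add: p_def inner_sum_left inner_sum_right sum_distrib_left algebra_simps inner_commute)
  also have "\<dots> = (\<Sum>k<n. (c k * lam k) * c k)"
    by (rule orth_double_sum) (use e_orth n_def in auto)
  also have "\<dots> \<le> (\<Sum>k<n. lam (n - 1) * (c k * c k))"
  proof (rule sum_mono)
    fix k assume "k \<in> {..<n}"
    hence "lam k \<le> lam (n - 1)" using lam_sorted n_def by auto
    thus "(c k * lam k) * c k \<le> lam (n - 1) * (c k * c k)"
      by (metis mult.commute mult.left_commute mult_right_mono zero_le_square)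
  qed
  also have "\<dots> = lam (n - 1) * inner p p"
  proof -
    have "inner p p = (\<Sum>k<n. \<Sum>m<n. c k * c m * inner (e k) (e m))"
      by (simp add: p_def inner_sum_left inner_sum_right sum_distrib_left algebra_simps inner_commute)
    also have "\<dots> = (\<Sum>k<n. c k * c k)"
      by (rule orth_double_sum) (use e_orth n_def in auto)
    finally show ?thesis by (simp add: sum_distrib_left)
  qed
  finally show ?thesis using xp n_def by simp
qed

lemma A_skew: "inner (Aop N H w x) y = - inner x (Aop N H w y)"
  unfolding Aop_def
  by (simp add: inner_sum_left inner_sum_right inner_diff_left inner_diff_right sum_subtractf inner_commute ac_simps)

lemma basis_pair:
  fixes A :: "'v::euclidean_space \<Rightarrow> 'v"
  assumes skew: "\<And>x y. inner (A x) y = - inner x (A y)"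
  shows "(\<Sum>b\<in>Basis. inner w b * inner h (A b) - inner h b * inner w (A b)) = 2 * inner h (A w)"
proof -
  have "(\<Sum>b\<in>Basis. inner w b * inner h (A b) - inner h b * inner w (A b))
      = (\<Sum>b\<in>Basis. inner h b * inner (A w) b - inner w b * inner (A h) b)"
  proof (rule sum.cong[OF refl])
    fix b
    have s1: "inner h (A b) = - inner (A h) b" using skew[of h b] by simp
    have s2: "inner w (A b) = - inner (A w) b" using skew[of w b] by simp
    show "inner w b * inner h (A b) - inner h b * inner w (A b) = inner h b * inner (A w) b - inner w b * inner (A h) b"
      unfolding s1 s2 by simp
  qed
  also have "\<dots> = (\<Sum>b\<in>Basis. inner h b * inner (A w) b) - (\<Sum>b\<in>Basis. inner w b * inner (A h) b)"
    by (rule sum_subtractf)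
  also have "\<dots> = - inner w (A h) + inner h (A w)"
    by (simp flip: euclidean_inner)
  also have "\<dots> = 2 * inner h (A w)" using skew[of w h] by (simp add: inner_commute)
  finally show ?thesis .
qed

lemma A_frob:
  fixes H :: "'v::euclidean_space \<Rightarrow> 'v"
  shows "(\<Sum>b\<in>Basis. inner (Aop N H w b) (Aop N H w b)) = 2 * (\<Sum>i<N. inner (H (w i)) (Aop N H w (w i)))"
proof -
  let ?A = "Aop N H w"
  have "(\<Sum>b\<in>Basis. inner (?A b) (?A b))
     = (\<Sum>b\<in>Basis. \<Sum>i<N. inner (w i) b * inner (H (w i)) (?A b) - inner (H (w i)) b * inner (w i) (?A b))"
  proof (rule sum.cong[OF refl])
    fix b :: 'v
    have "inner (?A b) (?A b) = inner (\<Sum>i<N. inner (w i) b *\<^sub>R H (w i) - inner (H (w i)) b *\<^sub>R w i) (?A b)"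
      by (simp add: Aop_def)
    also have "\<dots> = (\<Sum>i<N. inner (w i) b * inner (H (w i)) (?A b) - inner (H (w i)) b * inner (w i) (?A b))"
      by (simp add: inner_sum_left inner_diff_left)
    finally show "inner (?A b) (?A b) = (\<Sum>i<N. inner (w i) b * inner (H (w i)) (?A b) - inner (H (w i)) b * inner (w i) (?A b))" .
  qed
  also have "\<dots> = (\<Sum>i<N. \<Sum>b\<in>Basis. inner (w i) b * inner (H (w i)) (?A b) - inner (H (w i)) b * inner (w i) (?A b))"
    by (rule sum.swap)
  also have "\<dots> = (\<Sum>i<N. 2 * inner (H (w i)) (?A (w i)))"
    by (rule sum.cong[OF refl]) (rule basis_pair, rule A_skew)
  finally show ?thesis by (simp add: sum_distrib_left)
qed

lemma AW_le:
  fixes H :: "'v::euclidean_space \<Rightarrow> 'v"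
  assumes bw: "\<And>x. (\<Sum>j<N. (inner (w j) x)^2) \<le> inner x x"
  shows "(\<Sum>j<N. inner (Aop N H w (w j)) (Aop N H w (w j))) \<le> (\<Sum>b\<in>Basis. inner (Aop N H w b) (Aop N H w b))"
proof -
  let ?A = "Aop N H w"
  have "(\<Sum>j<N. inner (?A (w j)) (?A (w j))) = (\<Sum>j<N. \<Sum>b\<in>Basis. (inner (w j) (?A b))^2)"
    by (rule sum.cong[OF refl]) (subst euclidean_inner, simp add: A_skew power2_eq_square)
  also have "\<dots> = (\<Sum>b\<in>Basis. \<Sum>j<N. (inner (w j) (?A b))^2)" by (rule sum.swap)
  also have "\<dots> \<le> (\<Sum>b\<in>Basis. inner (?A b) (?A b))" by (rule sum_mono) (rule bw)
  finally show ?thesis .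
qed

lemma quad_diff:
  fixes H :: "'v::real_inner \<Rightarrow> 'v"
  assumes "linear H" and H_sa: "\<And>x y. inner (H x) y = inner x (H y)"
  shows "inner a (H a) - inner b (H b) = inner (a + b) (H (a - b))"
proof -
  have "inner a (H b) = inner b (H a)" using H_sa[of b a] by (simp add: inner_commute)
  thus ?thesis using assms(1) by (simp add: linear_diff inner_add_left inner_diff_right)
qed

lemma scalar_nonneg:
  fixes F :: "nat \<Rightarrow> 'v::real_inner"
  assumes "psd_mat N (\<lambda>i j. idm i j - tinner N F F i j)"
  shows "(\<Sum>j<N. (\<Sum>k<N. (idm k j - inner (F k) (F j)) * z k) * (\<Sum>l<N. inner (F l) (F j) * z l)) \<ge> 0"
proof -
  define v where "v = (\<Sum>l<N. z l *\<^sub>R F l)"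
  define g where "g j = (\<Sum>l<N. inner (F l) (F j) * z l)" for j
  have gj: "g j = inner (F j) v" for j
    unfolding g_def v_def by (simp add: inner_sum_right inner_commute mult.commute)
  have dj: "(\<Sum>k<N. (idm k j - inner (F k) (F j)) * z k) = z j - g j" if "j < N" for j
  proof -
    have "(\<Sum>k<N. idm k j * z k) = (\<Sum>k<N. if k = j then z j else 0)"
      by (rule sum.cong[OF refl]) (simp add: idm_def)
    also have "\<dots> = z j" using that by (simp add: sum.delta')
    finally show ?thesis unfolding g_def by (simp add: left_diff_distrib sum_subtractf)
  qed
  have "(\<Sum>j<N. (\<Sum>k<N. (idm k j - inner (F k) (F j)) * z k) * (\<Sum>l<N. inner (F l) (F j) * z l))
      = (\<Sum>j<N. z j * g j) - (\<Sum>j<N. (g j)^2)"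
  proof -
    have "(\<Sum>j<N. (\<Sum>k<N. (idm k j - inner (F k) (F j)) * z k) * (\<Sum>l<N. inner (F l) (F j) * z l))
        = (\<Sum>j<N. (z j - g j) * g j)"
      by (rule sum.cong[OF refl]) (simp add: dj g_def)
    thus ?thesis by (simp add: power2_eq_square left_diff_distrib sum_subtractf)
  qed
  also have "(\<Sum>j<N. z j * g j) = inner v v"
    unfolding gj v_def by (simp add: inner_sum_left)
  also have "(\<Sum>j<N. (g j)^2) = (\<Sum>j<N. (inner (F j) v)^2)" by (simp add: gj)
  finally show ?thesis using bessel[OF assms, of v] by simp
qed

lemma ip_step: "inner (2 *\<^sub>R a - s *\<^sub>R y) (- s *\<^sub>R (h::'v::real_inner)) = - 2 * s * inner a h + s^2 * inner y h"
  by (simp add: inner_diff_left power2_eq_square right_diff_distrib)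

lemma psd_cong: "(\<And>i j. i < N \<Longrightarrow> j < N \<Longrightarrow> A i j = B i j) \<Longrightarrow> psd_mat N A = psd_mat N B"
proof -
  assume a: "\<And>i j. i < N \<Longrightarrow> j < N \<Longrightarrow> A i j = B i j"
  have "\<And>x. (\<Sum>i<N. \<Sum>j<N. x i * A i j * x j) = (\<Sum>i<N. \<Sum>j<N. x i * B i j * x j)"
    by (intro sum.cong refl) (simp add: a)
  thus ?thesis unfolding psd_mat_def using a by auto
qed

theorem lemma4p3:
  fixes H :: "'v::euclidean_space \<Rightarrow> 'v"
    and N :: nat
    and lam :: "nat \<Rightarrow> real"
    and e :: "nat \<Rightarrow> 'v"
    and Vs :: "nat \<Rightarrow> 'v"
    and S :: "nat \<Rightarrow> 'v set"
    and eta_a eta_b delta_star delta_q delta_e s :: real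
    and ghat :: "(nat \<Rightarrow> 'v) \<Rightarrow> real \<Rightarrow> nat \<Rightarrow> 'v"
    and U :: "nat \<Rightarrow> 'v"
  assumes H_lin: "linear H"
    and H_sa: "\<And>x y. inner (H x) y = inner x (H y)"
    \<comment> \<open>eigenvalues lambda_1 <= ... <= lambda_{N_g} (indexed from 0) with orthonormal eigenbasis\<close>
    and lam_sorted: "\<And>i j. i \<le> j \<Longrightarrow> j < DIM('v) \<Longrightarrow> lam i \<le> lam j"
    and e_orth: "\<And>i j. i < DIM('v) \<Longrightarrow> j < DIM('v) \<Longrightarrow> inner (e i) (e j) = (if i = j then 1 else 0)"
    and e_eig: "\<And>i. i < DIM('v) \<Longrightarrow> H (e i) = lam i *\<^sub>R e i"
    and lam1_neg: "lam 0 < 0"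
    and N_pos: "0 < N" and N_lt: "N < DIM('v)"
    and gap: "lam (N - 1) < lam N"
    \<comment> \<open>V_* : V_*^T V_* = I_N, H V_* = V_* diag(lambda_1,...,lambda_N)\<close>
    and Vs_orth: "\<And>i j. i < N \<Longrightarrow> j < N \<Longrightarrow> inner (Vs i) (Vs j) = (if i = j then 1 else 0)"
    and Vs_eig: "\<And>i. i < N \<Longrightarrow> H (Vs i) = lam i *\<^sub>R Vs i"
    \<comment> \<open>the spaces V_{0_j}, spanned by d_j >= 1 eigenvectors of H, with lambda_max^0 <= 0\<close>
    and S_fin: "\<And>j. j < N \<Longrightarrow> finite (S j)"
    and S_ne: "\<And>j. j < N \<Longrightarrow> S j \<noteq> {}"
    and S_eig: "\<And>j v. j < N \<Longrightarrow> v \<in> S j \<Longrightarrow> v \<noteq> 0 \<and> (\<exists>\<mu>. H v = \<mu> *\<^sub>R v)"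
    and lmax0: "lambda_max0 N H S \<le> 0"
    \<comment> \<open>the constants and the (unique) implicit function ghat\<close>
    and eta_a_pos: "eta_a > 0" and eta_b_pos: "eta_b > 0" and delta_star_pos: "delta_star > 0"
    and ghat_ball: "\<And>W t. W \<in> tball N Vs eta_a \<Longrightarrow> 0 \<le> t \<Longrightarrow> t \<le> delta_star \<Longrightarrow>
         ghat W t \<in> tball N Vs eta_b"
    and ghat_eq: "\<And>W t. W \<in> tball N Vs eta_a \<Longrightarrow> 0 \<le> t \<Longrightarrow> t \<le> delta_star \<Longrightarrow>
         \<forall>i<N. ghat W t i - W i
           = - t *\<^sub>R Aapp N H (midpt (ghat W t) W) (midpt (ghat W t) W) i"
    and ghat_unique: "\<And>W t X. W \<in> tball N Vs eta_a \<Longrightarrow> 0 \<le> t \<Longrightarrow> t \<le> delta_star \<Longrightarrow>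
         X \<in> tball N Vs eta_b \<Longrightarrow>
         (\<forall>i<N. X i - W i = - t *\<^sub>R Aapp N H (midpt X W) (midpt X W) i) \<Longrightarrow>
         \<forall>i<N. X i = ghat W t i"
    \<comment> \<open>step size restrictions\<close>
    and dq_pos: "0 < delta_q"
    and dq_bound: "delta_q < min ((sqrt 2 - 1) / \<bar>lam 0\<bar>) (2 / \<bar>lam 0 - lam (DIM('v) - 1)\<bar>)"
    and de_def: "delta_e = min delta_star delta_q"
    and U_mem: "U \<in> tball N Vs eta_a" "U \<in> V0N N S" "U \<in> quasi_stiefel N"
    and s_range: "0 \<le> s" "s \<le> delta_e"
  shows "energy N H U - energy N H (gstep N H (ghat U s) s)
     \<ge> s * (1/2 - s/2 * \<bar>lam 0\<bar>)
         * (tnorm N (Aapp N H (midpt (ghat U s) U) (midpt (ghat U s) U)))\<^sup>2"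
proof -
  define Gh where "Gh = ghat U s"
  define w where "w = midpt Gh U"
  define A where "A = Aop N H w"
  have A_sk: "\<And>x y. inner (A x) y = - inner x (A y)" unfolding A_def by (rule A_skew)
  have s_ds: "s \<le> delta_star" using s_range de_def by simp
  have hyp: "Gh i - U i = - s *\<^sub>R A (w i)" if "i < N" for i
    using ghat_eq[OF U_mem(1) s_range(1) s_ds] that
    unfolding Gh_def w_def A_def Aapp_def by simp
  have wdef: "w i = (1/2::real) *\<^sub>R (Gh i + U i)" for i unfolding w_def midpt_def by simp
  have gram: "inner (Gh i) (Gh j) = inner (U i) (U j)" if "i < N" "j < N" for i j
  proof -
    have "inner (Gh i) (Gh j) - inner (U i) (U j) = inner (Gh i - U i) (w j) + inner (w i) (Gh j - U j)"
      unfolding wdef by (simp add: inner_add_left inner_add_right inner_diff_left inner_diff_right algebra_simps inner_commute)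
    also have "\<dots> = - s * (inner (A (w i)) (w j) + inner (w i) (A (w j)))"
      using that by (simp add: hyp algebra_simps)
    also have "\<dots> = 0" by (simp add: A_sk)
    finally show ?thesis by simp
  qed
  have psdU: "psd_mat N (\<lambda>i j. idm i j - tinner N U U i j)"
    using U_mem(3) unfolding quasi_stiefel_def by simp
  have psdG: "psd_mat N (\<lambda>i j. idm i j - tinner N Gh Gh i j)"
    using psdU by (subst psd_cong[where B = "\<lambda>i j. idm i j - tinner N U U i j"]) (auto simp: tinner_def gram)
  have bw: "(\<Sum>j<N. (inner (w j) x)^2) \<le> inner x x" for x
  proof -
    have "(\<Sum>j<N. (inner (w j) x)^2) \<le> (\<Sum>j<N. ((inner (Gh j) x)^2 + (inner (U j) x)^2) / 2)"
    proof (rule sum_mono)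
      fix j
      have e: "inner (w j) x = (inner (Gh j) x + inner (U j) x) / 2" unfolding wdef by (simp add: inner_add_left)
      have q: "((a + b)/2)^2 \<le> (a^2 + b^2)/2" for a b :: real
        using sum_squares_ge_zero[of "a - b" 0] by (simp add: power2_eq_square field_simps)
      show "(inner (w j) x)^2 \<le> ((inner (Gh j) x)^2 + (inner (U j) x)^2) / 2" unfolding e by (rule q)
    qed
    also have "\<dots> = ((\<Sum>j<N. (inner (Gh j) x)^2) + (\<Sum>j<N. (inner (U j) x)^2)) / 2"
      by (simp only: sum.distrib[symmetric] sum_divide_distrib)
    also have "\<dots> \<le> inner x x" using bessel[OF psdG, of x] bessel[OF psdU, of x] by simp
    finally show ?thesis .
  qed
  define K where "K = (\<Sum>i<N. inner (H (w i)) (A (w i)))"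
  define T where "T = (\<Sum>j<N. inner (A (w j)) (A (w j)))"
  have TK: "T \<le> 2 * K"
    using AW_le[where N=N and w=w and H=H, OF bw] A_frob[where N=N and H=H and w=w] unfolding T_def K_def A_def by simp
  have T_tn: "(tnorm N (Aapp N H (midpt (ghat U s) U) (midpt (ghat U s) U)))\<^sup>2 = T"
  proof -
    have "T \<ge> 0" unfolding T_def by (simp add: sum_nonneg)
    thus ?thesis unfolding tnorm_def T_def Aapp_def A_def w_def Gh_def by simp
  qed
  have EG: "energy N H U - energy N H Gh = s * K"
  proof -
    have "inner (Gh j) (H (Gh j)) - inner (U j) (H (U j)) = - 2 * s * inner (H (w j)) (A (w j))" if "j < N" for j
    proof -
      have "inner (Gh j) (H (Gh j)) - inner (U j) (H (U j)) = inner (Gh j + U j) (H (Gh j - U j))"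
        by (rule quad_diff[OF H_lin H_sa])
      also have "Gh j + U j = 2 *\<^sub>R w j" unfolding wdef by simp
      also have "H (Gh j - U j) = - s *\<^sub>R H (A (w j))" using hyp[OF that] H_lin by (simp add: linear_scale linear_neg)
      finally show ?thesis by (simp add: H_sa)
    qed
    hence "(\<Sum>j<N. inner (Gh j) (H (Gh j))) - (\<Sum>j<N. inner (U j) (H (U j))) = (\<Sum>j<N. - 2 * s * inner (H (w j)) (A (w j)))"
      by (simp add: sum_subtractf[symmetric])
    also have "\<dots> = -2 * (s * K)" unfolding K_def by (simp add: sum_negf sum_distrib_left mult.assoc)
    finally have h1: "(\<Sum>j<N. inner (Gh j) (H (Gh j))) - (\<Sum>j<N. inner (U j) (H (U j))) = -2 * (s * K)" .
    show ?thesis unfolding energy_def using h1 by linarith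
  qed
  define z where "z k = H (Gh k)" for k
  define D where "D k j = idm k j - inner (Gh k) (Gh j)" for k j
  define y where "y j = (\<Sum>k<N. D k j *\<^sub>R z k)" for j
  define g where "g = gstep N H Gh s"
  have gj: "g j = Gh j - s *\<^sub>R y j" for j
    unfolding g_def gstep_def tmul_def tinner_def y_def D_def z_def by simp
  define P where "P = (\<Sum>j<N. inner (y j) (z j))"
  define Q where "Q = (\<Sum>j<N. inner (y j) (y j))"
  define R where "R = (\<Sum>j<N. inner (y j) (H (y j)))"
  have EGg: "energy N H Gh - energy N H g = s * P - s^2 / 2 * R"
  proof -
    have "inner (g j) (H (g j)) - inner (Gh j) (H (Gh j)) = - 2 * s * inner (y j) (z j) + s^2 * inner (y j) (H (y j))" for j
    proof -
      have "inner (g j) (H (g j)) - inner (Gh j) (H (Gh j)) = inner (g j + Gh j) (H (g j - Gh j))"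
        by (rule quad_diff[OF H_lin H_sa])
      also have "g j + Gh j = 2 *\<^sub>R Gh j - s *\<^sub>R y j" unfolding gj by (simp add: scaleR_2)
      also have "H (g j - Gh j) = - s *\<^sub>R H (y j)" unfolding gj using H_lin by (simp add: linear_scale linear_neg)
      also have "inner (2 *\<^sub>R Gh j - s *\<^sub>R y j) (- s *\<^sub>R H (y j)) = - 2 * s * inner (Gh j) (H (y j)) + s^2 * inner (y j) (H (y j))"
        by (rule ip_step)
      also have "inner (Gh j) (H (y j)) = inner (y j) (z j)" unfolding z_def by (subst H_sa[symmetric]) (rule inner_commute)
      finally show ?thesis .
    qed
    hence "(\<Sum>j<N. inner (g j) (H (g j))) - (\<Sum>j<N. inner (Gh j) (H (Gh j))) = (\<Sum>j<N. - 2 * s * inner (y j) (z j) + s^2 * inner (y j) (H (y j)))"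
      by (simp add: sum_subtractf[symmetric])
    also have "\<dots> = - 2 * s * P + s^2 * R" by (simp only: P_def R_def sum.distrib sum_distrib_left)
    finally have h2: "(\<Sum>j<N. inner (g j) (H (g j))) - (\<Sum>j<N. inner (Gh j) (H (Gh j))) = - 2 * (s * P) + s^2 * R" by simp
    show ?thesis unfolding energy_def using h2 by linarith
  qed
  define \<zeta> where "\<zeta> b k = inner (z k) b" for b k
  have yb: "inner (y j) b = (\<Sum>k<N. D k j * \<zeta> b k)" for j b
    unfolding y_def \<zeta>_def by (simp add: inner_sum_left)
  have P_nn: "P \<ge> 0"
  proof -
    have "P = (\<Sum>j<N. \<Sum>b\<in>Basis. (\<Sum>k<N. D k j * \<zeta> b k) * \<zeta> b j)"
      unfolding P_def by (rule sum.cong[OF refl]) (subst euclidean_inner, simp add: yb \<zeta>_def)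
    also have "\<dots> = (\<Sum>b\<in>Basis. \<Sum>j<N. (\<Sum>k<N. D k j * \<zeta> b k) * \<zeta> b j)" by (rule sum.swap)
    also have "\<dots> \<ge> 0"
    proof (rule sum_nonneg)
      fix b :: 'v
      have "(\<Sum>j<N. (\<Sum>k<N. D k j * \<zeta> b k) * \<zeta> b j)
          = (\<Sum>k<N. \<Sum>j<N. \<zeta> b k * (idm k j - tinner N Gh Gh k j) * \<zeta> b j)"
      proof -
        have "(\<Sum>j<N. (\<Sum>k<N. D k j * \<zeta> b k) * \<zeta> b j) = (\<Sum>j<N. \<Sum>k<N. \<zeta> b k * (idm k j - tinner N Gh Gh k j) * \<zeta> b j)"
        proof (rule sum.cong[OF refl])
          fix j
          show "(\<Sum>k<N. D k j * \<zeta> b k) * \<zeta> b j = (\<Sum>k<N. \<zeta> b k * (idm k j - tinner N Gh Gh k j) * \<zeta> b j)"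
            unfolding sum_distrib_right by (rule sum.cong[OF refl]) (simp add: D_def tinner_def)
        qed
        also have "\<dots> = (\<Sum>k<N. \<Sum>j<N. \<zeta> b k * (idm k j - tinner N Gh Gh k j) * \<zeta> b j)" by (rule sum.swap)
        finally show ?thesis .
      qed
      also have "\<dots> \<ge> 0" using psdG unfolding psd_mat_def by blast
      finally show "(\<Sum>j<N. (\<Sum>k<N. D k j * \<zeta> b k) * \<zeta> b j) \<ge> 0" .
    qed
    finally show ?thesis .
  qed
  have QP: "Q \<le> P"
  proof -
    have zy: "z j - y j = (\<Sum>l<N. inner (Gh l) (Gh j) *\<^sub>R z l)" if "j < N" for j
    proof -
      have "(\<Sum>k<N. idm k j *\<^sub>R z k) = (\<Sum>k<N. if k = j then z j else 0)"
        by (rule sum.cong[OF refl]) (simp add: idm_def)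
      also have "\<dots> = z j" using that by (simp add: sum.delta')
      finally show ?thesis unfolding y_def D_def by (simp add: scaleR_left_diff_distrib sum_subtractf)
    qed
    have "P - Q = (\<Sum>j<N. inner (y j) (z j - y j))"
      unfolding P_def Q_def by (simp add: inner_diff_right sum_subtractf)
    also have "\<dots> = (\<Sum>j<N. \<Sum>b\<in>Basis. (\<Sum>k<N. (idm k j - inner (Gh k) (Gh j)) * \<zeta> b k) * (\<Sum>l<N. inner (Gh l) (Gh j) * \<zeta> b l))"
    proof (rule sum.cong[OF refl])
      fix j assume "j \<in> {..<N}"
      hence "inner (y j) (z j - y j) = inner (y j) (\<Sum>l<N. inner (Gh l) (Gh j) *\<^sub>R z l)" by (simp add: zy)
      also have "\<dots> = (\<Sum>b\<in>Basis. (\<Sum>k<N. (idm k j - inner (Gh k) (Gh j)) * \<zeta> b k) * (\<Sum>l<N. inner (Gh l) (Gh j) * \<zeta> b l))"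
        by (subst euclidean_inner) (simp add: yb D_def inner_sum_left \<zeta>_def)
      finally show "inner (y j) (z j - y j) = (\<Sum>b\<in>Basis. (\<Sum>k<N. (idm k j - inner (Gh k) (Gh j)) * \<zeta> b k) * (\<Sum>l<N. inner (Gh l) (Gh j) * \<zeta> b l))" .
    qed
    also have "\<dots> = (\<Sum>b\<in>Basis. \<Sum>j<N. (\<Sum>k<N. (idm k j - inner (Gh k) (Gh j)) * \<zeta> b k) * (\<Sum>l<N. inner (Gh l) (Gh j) * \<zeta> b l))"
      by (rule sum.swap)
    also have "\<dots> \<ge> 0" by (rule sum_nonneg) (rule scalar_nonneg[OF psdG])
    finally show ?thesis by simp
  qed
  have Q_nn: "Q \<ge> 0" unfolding Q_def by (simp add: sum_nonneg)
  define lm where "lm = lam (DIM('v) - 1)"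
  have RQ: "R \<le> lm * Q"
  proof -
    have "R \<le> (\<Sum>j<N. lm * inner (y j) (y j))" unfolding R_def lm_def
      by (rule sum_mono) (rule H_bound[OF H_lin lam_sorted e_orth e_eig])
    thus ?thesis unfolding Q_def by (simp add: sum_distrib_left)
  qed
  have s_dq: "s \<le> delta_q" using s_range de_def by simp
  have key: "s^2 / 2 * R \<le> s * P"
  proof (cases "lm \<le> 0")
    case True
    hence "R \<le> 0" using RQ Q_nn by (meson mult_nonpos_nonneg order_trans)
    moreover have "s * P \<ge> 0" using s_range P_nn by simp
    moreover have "s^2 / 2 * R \<le> 0" using \<open>R \<le> 0\<close> by (simp add: mult_nonneg_nonpos)
    ultimately show ?thesis by linarith
  next
    case False
    have "\<bar>lam 0 - lm\<bar> = lm - lam 0" using False lam1_neg by simp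
    hence "s < 2 / (lm - lam 0)" using s_dq dq_bound unfolding lm_def by simp
    hence "s * (lm - lam 0) < 2" using False lam1_neg by (simp add: field_simps)
    moreover have "s * lam 0 \<le> 0" using lam1_neg s_range by (simp add: mult_nonneg_nonpos)
    ultimately have slm: "s * lm \<le> 2" by (simp add: right_diff_distrib)
    have "lm * Q \<le> lm * P" using QP False by (simp add: mult_left_mono)
    hence "R \<le> lm * P" using RQ by linarith
    hence "s^2 / 2 * R \<le> s^2 / 2 * (lm * P)" by (simp add: mult_left_mono)
    also have "\<dots> = (s * lm) * (s * P) / 2" by (simp add: power2_eq_square)
    also have "\<dots> \<le> 2 * (s * P) / 2"
      using slm s_range P_nn by (intro divide_right_mono mult_right_mono) auto
    finally show ?thesis by simp
  qed
  have "energy N H U - energy N H g = s * K + (s * P - s^2 / 2 * R)" using EG EGg by simp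
  also have "\<dots> \<ge> s * K" using key by simp
  finally have "energy N H U - energy N H g \<ge> s * K" .
  moreover have "s * K \<ge> s * (1/2 - s/2 * \<bar>lam 0\<bar>) * T"
  proof -
    have "T \<ge> 0" unfolding T_def by (simp add: sum_nonneg)
    moreover have "(s/2 * \<bar>lam 0\<bar>) * T \<ge> 0" using s_range \<open>T \<ge> 0\<close> by simp
    ultimately have "(1/2 - s/2 * \<bar>lam 0\<bar>) * T \<le> K" using TK by (simp add: left_diff_distrib)
    thus ?thesis using s_range by (simp add: mult_left_mono mult.assoc)
  qed
  ultimately show ?thesis unfolding g_def Gh_def T_tn[symmetric] by simp
qed

end
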